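(* Under the setup in the context, let $(q_k,T_k,H_k)$, $k=0,\dots,K$, be consecutive configurations of the Turing machine (each obtained from the previous one by one machine step), with $q_0,\dots,q_{K-1}\notin F$ and $q_K\in F$. Put $t_k=\operatorname{diag}(T_k^TH_k)\in\{-1,1\}^d$, $v_k=(q_k,t_k)$ and $x_k=e_{v_k}\in\mathbb{R}^V$. Then for each $k=0,\dots,K-1$, applying one step of the iteration below to $(x_k,T_k,H_k)$ yields exactly $(x_{k+1},T_{k+1},H_{k+1})$ (the minimizer defining the direction being unique). Moreover $$c\le \ell(x_k,T_k,H_k)\le c+8b^2d\gamma+3d\gamma\quad (k<K),\qquad \ell(x_K,T_K,H_K)\le c+8b^2d\gamma+3d\gamma-b^3\gamma.$$
   Context: Turing machine: finite state set $Q$, halting states $F\subset Q$, $d$ tapes over alphabet $\{-1,1\}$, transition function $\delta=(\delta_1,\delta_2,\delta_3):Q\times\{-1,1\}^d\to Q\times\{-1,1\}^d\times\{-1,1\}^d$ (new state, symbols written, head moves). A subset $RO\subset\{1,\dots,d\}$ of tapes is read-only. Tapes have length $\tau$: a configuration is $(q,T,H)$ with $T\in\{-1,1\}^{\tau\times d}$ (column $T_i$ = tape $i$) and $H\in\{0,1\}^{\tau\times d}$ with exactly one $1$ per column (head positions). For $(q,t)\in Q\times\{-1,1\}^d$ define the linear head-shift $[\mathcal S(e_{q,t})H]_{i,j}=H_{i+\delta_3(q,t)_j,\,j}$, extended linearly in its first argument; heads are assumed never to reach the tape boundary. One machine step from $(q,T,H)$ with $t=\operatorname{diag}(T^TH)$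 (symbols under the heads) gives $q'=\delta_1(q,t)$; $T'_i=T_i+H_i\,(\delta_2(q,t)_i-t_i)$ for $i\notin RO$ and $T'_i=T_i$ for $i\in RO$; $H'=\mathcal S(e_{q,t})H$. Let $V=Q\times\{-1,1\}^d$ with standard basis $e_v\in\mathbb{R}^V$, $S=\operatorname{conv}\{e_v\}$, $E=\{((q,t),(q',t')):q'=\delta_1(q,t)\}$, and assume there are no $v,w\in V$ (possibly equal) with both $(v,w),(w,v)\in E$. For $v\ne w$ and $0<\mu\le1$, $e^\mu_{vw}=(1-\mu)e_v+\mu e_w$, $S_v^\mu=\operatorname{conv}(\{e_v\}\cup\{e_{vw}^\mu:w\ne v\})$. Constants: $\gamma>0$, $c\in\mathbb{R}$, and $b>0$ with $b^3\ge\frac12(b^3+db)$, $\frac12b^3-db\ge 2db^2$, $b^2>b$. Weights: $\omega_{(q,t)}=-b^3\gamma$ if $q\in F$ and $0$ otherwise; for $v=(q,t)$, $w=(q',t')$ with $(v,w)\in E$, $\omega_{vw}=-\big(b^3+b\,\#\{i:t'_i=t_i\}\big)\gamma$. Let $\ell_S:S\to\mathbb{R}$ be affine on every corner $S^{1/4}_v$ with $\ell_S(e_v)=\omega_v$; $\ell_S(e^{1/4}_{vw})=\omega_{vw}$ and $\ell_S(e^{3/4}_{vw})=\frac12\omega_{vw}$ for $(v,w)\in E$; $\ell_S(e^{1/4}_{vw})=\ell_S(e^{3/4}_{vw})=0$ if $v\ne w$ and neither $(v,w)$ nor $(w,v)$ is in $E$. Linear maps $\mathcal T_\downarrow,\mathcal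 T_\curvearrowright:\mathbb{R}^V\to\mathbb{R}^d$: $\mathcal T_\downarrow e_{q,t}=t$, $\mathcal T_\curvearrowright e_{q,t}=\delta_2(q,t)$. Loss: $\ell(x,T,H)=c+\ell_S(x)+\frac12\gamma\|\operatorname{diag}(T^TH)-\mathcal T_\curvearrowright x\|^2+2b^2\gamma\|\operatorname{diag}(T^T\mathcal S(x)H)-\mathcal T_\downarrow x\|^2+\frac12\gamma\|\mathcal S(x)H-H\|_F^2$, where $\operatorname{diag}(M)$ is the vector of diagonal entries of a $d\times d$ matrix. Iteration (gradient descent in which certain quantities are frozen, "stop-gradient"): from $(x_k,T_k,H_k)$ let $r_k=\operatorname{diag}(T_k^T\mathcal S(x_k)H_k)$ (held constant); $x_{k+1}=\operatorname{argmin}_{y\in S}\partial_{y-x_k}\Phi_k(x_k)$ where $\Phi_k(x)=\ell_S(x)+2b^2\gamma\|r_k-\mathcal T_\downarrow x\|^2$ and $\partial_{y-x}$ is the one-sided directional derivative; $T_{k+1}=T_k-\frac1\gamma G_k$ where $G_k$ is the gradient at $T=T_k$ of $T\mapsto\frac12\gamma\|\operatorname{diag}(T^TH_k)-\mathcal T_\curvearrowright x_k\|^2$ with respect to the columns $T_i$, $i\notin RO$, and zero in the columns $i\in RO$; $H_{k+1}=H_k-\frac1\gamma\nabla_H\big[\frac12\gamma\|\mathcal S(x_k)H_k-H\|_F^2\big]_{H=H_k}$. *)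

theory Defs
  imports "HOL-Analysis.Analysis"
begin

text \<open>Tape symbols in {-1,1} are encoded by bool (True = 1, False = -1) inside the
  finite index set V = Q x {-1,1}^d; tapes are indexed by a finite type 'd (d = CARD('d)).
  A tau x d real matrix is a function int => 'd => real which is zero for rows
  outside {0..<tau} (rows are int-indexed to allow the head shift i + delta3).\<close>

type_synonym 'd tmat = "int \<Rightarrow> 'd \<Rightarrow> real"

definition sym :: "bool \<Rightarrow> real" where
  "sym b = (if b then 1 else -1)"

definition symv :: "('d::finite \<Rightarrow> bool) \<Rightarrow> real^'d" where
  "symv t = (\<chi> j. sym (t j))"

definition move :: "bool \<Rightarrow> int" where
  "move b = (if b then 1 else -1)"

definition inr :: "nat \<Rightarrow> int \<Rightarrow> bool" where
  "inr tau i \<longleftrightarrow> 0 \<le> i \<and> i < int tau"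

definition mat_at :: "nat \<Rightarrow> 'd tmat \<Rightarrow> int \<Rightarrow> 'd \<Rightarrow> real" where
  "mat_at tau M i j = (if inr tau i then M i j else 0)"

definition diagTH :: "nat \<Rightarrow> 'd::finite tmat \<Rightarrow> 'd tmat \<Rightarrow> real^'d" where
  "diagTH tau T H = (\<chi> j. \<Sum>i\<in>{0..<int tau}. T i j * H i j)"

definition fro2 :: "nat \<Rightarrow> 'd::finite tmat \<Rightarrow> real" where
  "fro2 tau M = (\<Sum>i\<in>{0..<int tau}. \<Sum>j\<in>UNIV. (M i j)^2)"

definition shift_e :: "nat \<Rightarrow> ('q \<Rightarrow> ('d \<Rightarrow> bool) \<Rightarrow> ('d \<Rightarrow> bool))
    \<Rightarrow> 'q \<times> ('d \<Rightarrow> bool) \<Rightarrow> 'd tmat \<Rightarrow> 'd tmat" where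
  "shift_e tau \<delta>3 v H =
     (\<lambda>i j. if inr tau i then mat_at tau H (i + move (\<delta>3 (fst v) (snd v) j)) j else 0)"

definition shiftS :: "nat \<Rightarrow> ('q::finite \<Rightarrow> ('d::finite \<Rightarrow> bool) \<Rightarrow> ('d \<Rightarrow> bool))
    \<Rightarrow> real^('q \<times> ('d \<Rightarrow> bool)) \<Rightarrow> 'd tmat \<Rightarrow> 'd tmat" where
  "shiftS tau \<delta>3 x H = (\<lambda>i j. \<Sum>v\<in>UNIV. x$v * shift_e tau \<delta>3 v H i j)"

definition valid_config :: "nat \<Rightarrow> 'd tmat \<Rightarrow> 'd tmat \<Rightarrow> bool" where
  "valid_config tau T H \<longleftrightarrow>
     (\<forall>i j. \<not> inr tau i \<longrightarrow> T i j = 0 \<and> H i j = 0) \<and>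
     (\<forall>i j. inr tau i \<longrightarrow> T i j \<in> {-1, 1} \<and> H i j \<in> {0, 1}) \<and>
     (\<forall>j. \<exists>!i. inr tau i \<and> H i j = 1)"

definition heads_interior :: "nat \<Rightarrow> 'd tmat \<Rightarrow> bool" where
  "heads_interior tau H \<longleftrightarrow> (\<forall>i j. H i j = 1 \<longrightarrow> 0 < i \<and> i < int tau - 1)"

definition readsym :: "nat \<Rightarrow> 'd::finite tmat \<Rightarrow> 'd tmat \<Rightarrow> ('d \<Rightarrow> bool)" where
  "readsym tau T H = (\<lambda>j. diagTH tau T H $ j = 1)"

definition tm_step :: "nat \<Rightarrow> 'd set \<Rightarrow> ('q \<Rightarrow> ('d::finite \<Rightarrow> bool) \<Rightarrow> 'q)
    \<Rightarrow> ('q \<Rightarrow> ('d \<Rightarrow> bool) \<Rightarrow> ('d \<Rightarrow> bool)) \<Rightarrow> ('q \<Rightarrow> ('d \<Rightarrow> bool) \<Rightarrow> ('d \<Rightarrow> bool))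
    \<Rightarrow> 'q \<times> 'd tmat \<times> 'd tmat \<Rightarrow> 'q \<times> 'd tmat \<times> 'd tmat" where
  "tm_step tau RO \<delta>1 \<delta>2 \<delta>3 cfg =
     (case cfg of (q, T, H) \<Rightarrow>
        (let t = readsym tau T H in
          (\<delta>1 q t,
           (\<lambda>i j. if j \<in> RO then T i j else T i j + H i j * (sym (\<delta>2 q t j) - sym (t j))),
           shift_e tau \<delta>3 (q, t) H)))"

definition ev :: "'v::finite \<Rightarrow> real^'v" where
  "ev v = axis v 1"

definition simplexS :: "(real^'v::finite) set" where
  "simplexS = convex hull (range ev)"

definition evw :: "'v::finite \<Rightarrow> 'v \<Rightarrow> real \<Rightarrow> real^'v" where
  "evw v w \<mu> = (1 - \<mu>) *\<^sub>R ev v + \<mu> *\<^sub>R ev w"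

definition corner :: "'v::finite \<Rightarrow> real \<Rightarrow> (real^'v) set" where
  "corner v \<mu> = convex hull (insert (ev v) {evw v w \<mu> | w. w \<noteq> v})"

definition affine_on :: "(real^'v::finite) set \<Rightarrow> (real^'v \<Rightarrow> real) \<Rightarrow> bool" where
  "affine_on C f \<longleftrightarrow> (\<exists>a c. \<forall>x\<in>C. f x = a \<bullet> x + c)"

definition edges :: "('q \<Rightarrow> ('d \<Rightarrow> bool) \<Rightarrow> 'q) \<Rightarrow> (('q \<times> ('d \<Rightarrow> bool)) \<times> ('q \<times> ('d \<Rightarrow> bool))) set" where
  "edges \<delta>1 = {(v, w). fst w = \<delta>1 (fst v) (snd v)}"

definition wv :: "'q set \<Rightarrow> real \<Rightarrow> real \<Rightarrow> 'q \<times> ('d \<Rightarrow> bool) \<Rightarrow> real" where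
  "wv F b \<gamma> v = (if fst v \<in> F then - (b^3 * \<gamma>) else 0)"

definition wvw :: "real \<Rightarrow> real \<Rightarrow> 'q \<times> ('d::finite \<Rightarrow> bool) \<Rightarrow> 'q \<times> ('d \<Rightarrow> bool) \<Rightarrow> real" where
  "wvw b \<gamma> v w = - (b^3 + b * real (card {i. snd w i = snd v i})) * \<gamma>"

definition lS_ok :: "'q set \<Rightarrow> ('q \<Rightarrow> ('d::finite \<Rightarrow> bool) \<Rightarrow> 'q) \<Rightarrow> real \<Rightarrow> real
    \<Rightarrow> (real^('q::finite \<times> ('d \<Rightarrow> bool)) \<Rightarrow> real) \<Rightarrow> bool" where
  "lS_ok F \<delta>1 b \<gamma> lS \<longleftrightarrow>
     (\<forall>v. affine_on (corner v (1/4)) lS) \<and>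
     (\<forall>v. lS (ev v) = wv F b \<gamma> v) \<and>
     (\<forall>v w. (v, w) \<in> edges \<delta>1 \<longrightarrow>
        lS (evw v w (1/4)) = wvw b \<gamma> v w \<and> lS (evw v w (3/4)) = wvw b \<gamma> v w / 2) \<and>
     (\<forall>v w. v \<noteq> w \<and> (v, w) \<notin> edges \<delta>1 \<and> (w, v) \<notin> edges \<delta>1 \<longrightarrow>
        lS (evw v w (1/4)) = 0 \<and> lS (evw v w (3/4)) = 0)"

definition Tdown :: "real^('q::finite \<times> ('d::finite \<Rightarrow> bool)) \<Rightarrow> real^'d" where
  "Tdown x = (\<Sum>v\<in>UNIV. x$v *\<^sub>R symv (snd v))"

definition Tcurv :: "('q::finite \<Rightarrow> ('d::finite \<Rightarrow> bool) \<Rightarrow> ('d \<Rightarrow> bool))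
    \<Rightarrow> real^('q \<times> ('d \<Rightarrow> bool)) \<Rightarrow> real^'d" where
  "Tcurv \<delta>2 x = (\<Sum>v\<in>UNIV. x$v *\<^sub>R symv (\<delta>2 (fst v) (snd v)))"

definition loss :: "nat \<Rightarrow> ('q::finite \<Rightarrow> ('d::finite \<Rightarrow> bool) \<Rightarrow> ('d \<Rightarrow> bool))
    \<Rightarrow> ('q \<Rightarrow> ('d \<Rightarrow> bool) \<Rightarrow> ('d \<Rightarrow> bool)) \<Rightarrow> real \<Rightarrow> real \<Rightarrow> real
    \<Rightarrow> (real^('q \<times> ('d \<Rightarrow> bool)) \<Rightarrow> real)
    \<Rightarrow> real^('q \<times> ('d \<Rightarrow> bool)) \<Rightarrow> 'd tmat \<Rightarrow> 'd tmat \<Rightarrow> real" where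
  "loss tau \<delta>2 \<delta>3 \<gamma> b c lS x T H =
     c + lS x
     + 1/2 * \<gamma> * (norm (diagTH tau T H - Tcurv \<delta>2 x))^2
     + 2 * b^2 * \<gamma> * (norm (diagTH tau T (shiftS tau \<delta>3 x H) - Tdown x))^2
     + 1/2 * \<gamma> * fro2 tau (\<lambda>i j. shiftS tau \<delta>3 x H i j - H i j)"

definition has_dirderiv :: "('a::real_vector \<Rightarrow> real) \<Rightarrow> 'a \<Rightarrow> 'a \<Rightarrow> real \<Rightarrow> bool" where
  "has_dirderiv f x u L \<longleftrightarrow> ((\<lambda>h. (f (x + h *\<^sub>R u) - f x) / h) \<longlongrightarrow> L) (at_right 0)"

definition dirderiv :: "('a::real_vector \<Rightarrow> real) \<Rightarrow> 'a \<Rightarrow> 'a \<Rightarrow> real" where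
  "dirderiv f x u = Lim (at_right 0) (\<lambda>h. (f (x + h *\<^sub>R u) - f x) / h)"

definition mgrad :: "nat \<Rightarrow> ('d tmat \<Rightarrow> real) \<Rightarrow> 'd tmat \<Rightarrow> 'd tmat" where
  "mgrad tau f M = (\<lambda>i j. if inr tau i then deriv (\<lambda>s. f (M(i := (M i)(j := s)))) (M i j) else 0)"

text \<open>one step of the stop-gradient iteration, from (x,T,H) to (x',T',H');
  the direction minimiser is required to exist and to be unique\<close>
definition iter_step :: "nat \<Rightarrow> 'd set \<Rightarrow> ('q::finite \<Rightarrow> ('d::finite \<Rightarrow> bool) \<Rightarrow> ('d \<Rightarrow> bool))
    \<Rightarrow> ('q \<Rightarrow> ('d \<Rightarrow> bool) \<Rightarrow> ('d \<Rightarrow> bool)) \<Rightarrow> real \<Rightarrow> real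
    \<Rightarrow> (real^('q \<times> ('d \<Rightarrow> bool)) \<Rightarrow> real)
    \<Rightarrow> real^('q \<times> ('d \<Rightarrow> bool)) \<Rightarrow> 'd tmat \<Rightarrow> 'd tmat
    \<Rightarrow> real^('q \<times> ('d \<Rightarrow> bool)) \<Rightarrow> 'd tmat \<Rightarrow> 'd tmat \<Rightarrow> bool" where
  "iter_step tau RO \<delta>2 \<delta>3 \<gamma> b lS x T H x' T' H' \<longleftrightarrow>
     (let r = diagTH tau T (shiftS tau \<delta>3 x H);
          \<Phi> = (\<lambda>y. lS y + 2 * b^2 * \<gamma> * (norm (r - Tdown y))^2);
          fT = (\<lambda>T0. 1/2 * \<gamma> * (norm (diagTH tau T0 H - Tcurv \<delta>2 x))^2);
          G = (\<lambda>i j. if j \<in> RO then 0 else mgrad tau fT T i j);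
          P = shiftS tau \<delta>3 x H;
          fH = (\<lambda>H0. 1/2 * \<gamma> * fro2 tau (\<lambda>i j. P i j - H0 i j))
      in (\<forall>y\<in>simplexS. \<exists>L. has_dirderiv \<Phi> x (y - x) L)
         \<and> x' \<in> simplexS
         \<and> (\<forall>y\<in>simplexS. y \<noteq> x' \<longrightarrow> dirderiv \<Phi> x (x' - x) < dirderiv \<Phi> x (y - x))
         \<and> T' = (\<lambda>i j. T i j - (1/\<gamma>) * G i j)
         \<and> H' = (\<lambda>i j. H i j - (1/\<gamma>) * mgrad tau fH H i j))"

end

theory Submission
  imports Defs
begin

lemma sym_pm: "sym a \<in> {-1, 1}" by (simp add: sym_def)
lemma sym_eq_iff[simp]: "sym a = sym b \<longleftrightarrow> a = b" by (simp add: sym_def)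

lemma sum_if_card: "(\<Sum>j\<in>(UNIV::'a::finite set). if P j then (c::real) else 0) = c * real (card {j. P j})"
  by (simp add: sum.If_cases)

lemma symv_inner:
  "(symv s - symv t) \<bullet> (symv u - symv t) = 4 * real (card {j. s j \<noteq> t j \<and> u j \<noteq> t j})"
proof -
  have "(symv s - symv t) \<bullet> (symv u - symv t) = (\<Sum>j\<in>UNIV. if s j \<noteq> t j \<and> u j \<noteq> t j then 4 else 0)"
    unfolding inner_vec_def symv_def
    by (rule sum.cong) (auto simp: sym_def)
  then show ?thesis by (simp add: sum_if_card)
qed

lemma symv_norm2: "(norm (symv s - symv t))^2 = 4 * real (card {j. s j \<noteq> t j})"
  using symv_inner[of s t s] by (simp add: power2_norm_eq_inner)

lemma valid_heads:
  assumes "valid_config tau T H"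
  shows "\<exists>h. \<forall>j. inr tau (h j) \<and> (\<forall>i. H i j = (if i = h j then 1 else 0))"
proof -
  have V1: "\<forall>i j. \<not> inr tau i \<longrightarrow> T i j = 0 \<and> H i j = 0"
    using assms unfolding valid_config_def by (rule conjunct1)
  have V2: "\<forall>i j. inr tau i \<longrightarrow> T i j \<in> {-1, 1} \<and> H i j \<in> {0, 1}"
    using assms unfolding valid_config_def by (rule conjunct1[OF conjunct2])
  have V3: "\<forall>j. \<exists>!i. inr tau i \<and> H i j = 1"
    using assms unfolding valid_config_def by (rule conjunct2[OF conjunct2])
  have A: "\<And>i j. \<not> inr tau i \<Longrightarrow> H i j = 0" using V1 by simp
  have B: "\<And>i j. inr tau i \<Longrightarrow> H i j = 0 \<or> H i j = 1" using V2 by simp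
  have C: "\<And>j. \<exists>!i. inr tau i \<and> H i j = 1" using V3 by (rule spec)
  have "\<forall>j. \<exists>hj. inr tau hj \<and> (\<forall>i. H i j = (if i = hj then 1 else 0))"
  proof
    fix j
    obtain hj where hj: "inr tau hj \<and> H hj j = 1" and u0: "\<forall>i. inr tau i \<and> H i j = 1 \<longrightarrow> i = hj"
      using C[of j] unfolding Ex1_def by blast
    have u: "\<And>i. inr tau i \<and> H i j = 1 \<Longrightarrow> i = hj" using u0 by blast
    have "H i j = (if i = hj then 1 else 0)" for i
    proof (cases "inr tau i")
      case True
      show ?thesis
      proof (cases "i = hj")
        case True
        then show ?thesis using hj by simp
      next
        case False
        then have "H i j \<noteq> 1" using u[of i] \<open>inr tau i\<close> by blast
        then show ?thesis using B[OF \<open>inr tau i\<close>, of j] False by simp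
      qed
    next
      case False
      then have "i \<noteq> hj" using hj by blast
      then show ?thesis using A[OF False, of j] by simp
    qed
    then show "\<exists>hj. inr tau hj \<and> (\<forall>i. H i j = (if i = hj then 1 else 0))" using hj by blast
  qed
  then show ?thesis by (rule choice)
qed

lemma times_if1[simp]: "(a::real) * (if P then 1 else 0) = (if P then a else 0)" by simp
lemma if1_times[simp]: "(if P then 1 else 0) * (a::real) = (if P then a else 0)" by simp
lemma if1_scale[simp]: "(if P then 1 else 0) *\<^sub>R (x::'a::real_vector) = (if P then x else 0)" by simp

lemma diagTH_ind:
  assumes "\<And>i. H i j = (if i = h then 1 else 0)" "inr tau h"
  shows "diagTH tau M H $ j = M h j"
proof -
  have "diagTH tau M H $ j = (\<Sum>i\<in>{0..<int tau}. if i = h then M i j else 0)"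
    unfolding diagTH_def by (simp add: assms(1))
  also have "\<dots> = M h j" using assms(2) by (simp add: inr_def)
  finally show ?thesis .
qed

lemma move_pm: "move b = 1 \<or> move b = -1" by (simp add: move_def)

lemma shift_ind:
  assumes "\<And>i. H i j = (if i = h then 1 else 0)" "inr tau h" "0 < h" "h < int tau - 1"
  shows "shift_e tau \<delta>3 v H i j = (if i = h - move (\<delta>3 (fst v) (snd v) j) then 1 else 0)"
    and "inr tau (h - move (\<delta>3 (fst v) (snd v) j))"
    and "h - move (\<delta>3 (fst v) (snd v) j) \<noteq> h"
proof -
  let ?m = "move (\<delta>3 (fst v) (snd v) j)"
  have m: "?m = 1 \<or> ?m = -1" by (rule move_pm)
  show in2: "inr tau (h - ?m)" using m assms(3,4) by (auto simp: inr_def)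
  show "h - ?m \<noteq> h" using m by auto
  show "shift_e tau \<delta>3 v H i j = (if i = h - ?m then 1 else 0)"
  proof (cases "inr tau i")
    case True
    then show ?thesis unfolding shift_e_def mat_at_def using in2 assms(2) by (auto simp: assms(1))
  next
    case False
    then have "i \<noteq> h - ?m" using in2 by blast
    then show ?thesis unfolding shift_e_def using False by simp
  qed
qed

lemma ev_comp: "ev v $ w = (if w = v then 1 else 0)"
  by (simp add: ev_def axis_def)

lemma shiftS_ev: "shiftS tau \<delta>3 (ev v) H = shift_e tau \<delta>3 v H"
  unfolding shiftS_def by (simp add: ev_comp)

lemma Tdown_ev: "Tdown (ev w) = symv (snd w)"
  unfolding Tdown_def by (simp add: ev_comp)

lemma Tcurv_ev: "Tcurv \<delta>2 (ev w) = symv (\<delta>2 (fst w) (snd w))"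
  unfolding Tcurv_def by (simp add: ev_comp)

lemma config_facts:
  assumes "valid_config tau T H" "heads_interior tau H"
  obtains h where "\<And>j. inr tau (h j)" "\<And>i j. H i j = (if i = h j then 1 else 0)"
    "\<And>j. 0 < h j" "\<And>j. h j < int tau - 1"
    "\<And>i j. inr tau i \<Longrightarrow> T i j = 1 \<or> T i j = -1"
    "\<And>i j. \<not> inr tau i \<Longrightarrow> T i j = 0"
proof -
  obtain h where h: "\<forall>j. inr tau (h j) \<and> (\<forall>i. H i j = (if i = h j then 1 else 0))"
    using valid_heads[OF assms(1)] by blast
  have V1: "\<forall>i j. \<not> inr tau i \<longrightarrow> T i j = 0 \<and> H i j = 0"
    using assms(1) unfolding valid_config_def by (rule conjunct1)
  have V2: "\<forall>i j. inr tau i \<longrightarrow> T i j \<in> {-1, 1} \<and> H i j \<in> {0, 1}"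
    using assms(1) unfolding valid_config_def by (rule conjunct1[OF conjunct2])
  have hi: "H i j = 1 \<Longrightarrow> 0 < i \<and> i < int tau - 1" for i j
    using assms(2) unfolding heads_interior_def by blast
  have "H (h j) j = 1" for j using h by simp
  then have "0 < h j \<and> h j < int tau - 1" for j using hi by blast
  moreover have "inr tau i \<Longrightarrow> T i j = 1 \<or> T i j = -1" for i j using V2 by blast
  moreover have "\<not> inr tau i \<Longrightarrow> T i j = 0" for i j using V1 by blast
  ultimately show ?thesis using that h by blast
qed

lemma symv_readsym:
  assumes "\<And>j. diagTH tau T H $ j = 1 \<or> diagTH tau T H $ j = -1"
  shows "symv (readsym tau T H) = diagTH tau T H"
  unfolding symv_def readsym_def vec_eq_iff
proof
  fix j show "(\<chi> j. sym (diagTH tau T H $ j = 1)) $ j = diagTH tau T H $ j"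
    using assms[of j] by (auto simp: sym_def)
qed

lemma fro2_shift:
  fixes H H1 :: "'d::finite tmat"
  assumes "\<And>i j. H i j = (if i = h j then 1 else 0)" "\<And>i j. H1 i j = (if i = h' j then 1 else 0)"
    "\<And>j. inr tau (h j)" "\<And>j. inr tau (h' j)" "\<And>j. h' j \<noteq> h j"
  shows "fro2 tau (\<lambda>i j. H1 i j - H i j) = 2 * real CARD('d)"
proof -
  have "fro2 tau (\<lambda>i j. H1 i j - H i j) = (\<Sum>j\<in>UNIV. \<Sum>i\<in>{0..<int tau}. (H1 i j - H i j)^2)"
    unfolding fro2_def by (rule sum.swap)
  also have "\<dots> = (\<Sum>j\<in>(UNIV::'d set). \<Sum>i\<in>{0..<int tau}. (if i = h' j then 1 else 0) + (if i = h j then 1 else 0))"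
  proof (rule sum.cong[OF refl], rule sum.cong[OF refl])
    fix i j show "(H1 i j - H i j)^2 = (if i = h' j then 1 else 0) + (if i = h j then (1::real) else 0)"
      using assms(5)[of j] by (auto simp: assms(1,2))
  qed
  also have "\<dots> = (\<Sum>j\<in>(UNIV::'d set). 2)"
  proof (rule sum.cong[OF refl])
    fix j
    have "h' j \<in> {0..<int tau}" "h j \<in> {0..<int tau}" using assms(3,4)[of j] by (auto simp: inr_def)
    then show "(\<Sum>i\<in>{0..<int tau}. (if i = h' j then 1 else 0) + (if i = h j then 1 else 0)) = (2::real)"
      by (simp add: sum.distrib)
  qed
  finally show ?thesis by simp
qed

lemma card_le_CARD: "card {j::'d::finite. P j} \<le> CARD('d)"
  by (rule card_mono) auto

lemma loss_eval:
  fixes T H :: "'d::finite tmat" and q0 :: "'q::finite"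
  assumes "valid_config tau T H" "heads_interior tau H"
  shows "\<exists>n1 n2::nat. n1 \<le> CARD('d) \<and> n2 \<le> CARD('d) \<and>
     loss tau \<delta>2 \<delta>3 \<gamma> b c lS (ev (q0, readsym tau T H)) T H
       = c + lS (ev (q0, readsym tau T H)) + 2*\<gamma>*real n1 + 8*b^2*\<gamma>*real n2 + \<gamma> * real CARD('d)"
proof -
  obtain h where h1: "\<And>j. inr tau (h j)" and h2: "\<And>i j. H i j = (if i = h j then 1 else 0)"
    and h3: "\<And>j. 0 < h j" and h4: "\<And>j. h j < int tau - 1"
    and T1: "\<And>i j. inr tau i \<Longrightarrow> T i j = 1 \<or> T i j = -1"
    and T0: "\<And>i j. \<not> inr tau i \<Longrightarrow> T i j = 0"
    by (rule config_facts[OF assms]) blast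
  define t where "t = readsym tau T H"
  define v where "v = (q0, t)"
  define h' where "h' j = h j - move (\<delta>3 (fst v) (snd v) j)" for j
  define H1 where "H1 = shift_e tau \<delta>3 v H"
  have H1i: "H1 i j = (if i = h' j then 1 else 0)" for i j
    unfolding H1_def h'_def by (rule shift_ind(1)[OF h2 h1 h3 h4])
  have h'1: "inr tau (h' j)" for j unfolding h'_def by (rule shift_ind(2)[OF h2 h1 h3 h4])
  have h'2: "h' j \<noteq> h j" for j unfolding h'_def by (rule shift_ind(3)[OF h2 h1 h3 h4])
  have D0: "diagTH tau T H $ j = T (h j) j" for j by (rule diagTH_ind[OF h2 h1])
  have D1: "diagTH tau T H1 $ j = T (h' j) j" for j by (rule diagTH_ind[OF H1i h'1])
  have St: "symv t = diagTH tau T H" unfolding t_def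
    by (rule symv_readsym) (simp add: D0 T1[OF h1])
  define s where "s = readsym tau T H1"
  have Ss: "symv s = diagTH tau T H1" unfolding s_def
    by (rule symv_readsym) (simp add: D1 T1[OF h'1])
  have SH: "shiftS tau \<delta>3 (ev v) H = H1" unfolding H1_def by (rule shiftS_ev)
  have F: "fro2 tau (\<lambda>i j. H1 i j - H i j) = 2 * real CARD('d)"
    by (rule fro2_shift[OF h2 H1i h1 h'1 h'2])
  have "loss tau \<delta>2 \<delta>3 \<gamma> b c lS (ev v) T H
     = c + lS (ev v) + 1/2*\<gamma>*(norm (symv t - symv (\<delta>2 q0 t)))^2
        + 2*b^2*\<gamma>*(norm (symv s - symv t))^2 + 1/2*\<gamma>*(2 * real CARD('d))"
    unfolding loss_def SH F Tcurv_ev Tdown_ev St[symmetric] Ss[symmetric] by (simp only: v_def fst_conv snd_conv)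
  also have "\<dots> = c + lS (ev v) + 2*\<gamma>*real (card {j. t j \<noteq> \<delta>2 q0 t j})
        + 8*b^2*\<gamma>*real (card {j. s j \<noteq> t j}) + \<gamma> * real CARD('d)"
    unfolding symv_norm2 by simp
  finally have "loss tau \<delta>2 \<delta>3 \<gamma> b c lS (ev v) T H = c + lS (ev v) + 2*\<gamma>*real (card {j. t j \<noteq> \<delta>2 q0 t j})
        + 8*b^2*\<gamma>*real (card {j. s j \<noteq> t j}) + \<gamma> * real CARD('d)" .
  moreover have "card {j. t j \<noteq> \<delta>2 q0 t j} \<le> CARD('d)" "card {j. s j \<noteq> t j} \<le> CARD('d)"
    by (rule card_le_CARD)+
  ultimately show ?thesis unfolding v_def t_def by blast
qed

lemma simplex_props:
  assumes "y \<in> (simplexS :: (real^'v::finite) set)"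
  shows "\<And>w. 0 \<le> y$w" "(\<Sum>w\<in>UNIV. y$w) = 1"
proof -
  let ?C = "{y::real^'v. (\<forall>w. 0 \<le> y$w) \<and> (\<Sum>w\<in>UNIV. y$w) = 1}"
  have "convex ?C"
    unfolding convex_def
  proof (intro ballI allI impI)
    fix x z :: "real^'v" and u v :: real
    assume x: "x \<in> ?C" and z: "z \<in> ?C" and u: "0 \<le> u" and v: "0 \<le> v" and uv: "u + v = 1"
    have "\<forall>w. 0 \<le> (u *\<^sub>R x + v *\<^sub>R z)$w" using x z u v by simp
    moreover have "(\<Sum>w\<in>UNIV. (u *\<^sub>R x + v *\<^sub>R z)$w) = 1"
      using x z uv by (simp add: sum.distrib sum_distrib_left[symmetric])
    ultimately show "u *\<^sub>R x + v *\<^sub>R z \<in> ?C" by blast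
  qed
  moreover have "range ev \<subseteq> ?C"
    by (auto simp: ev_comp)
  ultimately have "simplexS \<subseteq> ?C" unfolding simplexS_def by (rule hull_minimal[rotated])
  then show "\<And>w. 0 \<le> y$w" "(\<Sum>w\<in>UNIV. y$w) = 1" using assms by blast+
qed

lemma ev_in_simplex: "ev w \<in> simplexS"
  unfolding simplexS_def by (rule hull_inc) simp

lemma vec_decomp: "y = (\<Sum>w\<in>UNIV. y$w *\<^sub>R ev (w::'v::finite))"
  by (simp add: vec_eq_iff ev_comp)

lemma Tdown_add: "Tdown (x + y) = Tdown x + Tdown y"
  by (simp add: Tdown_def scaleR_add_left sum.distrib)

lemma Tdown_scale: "Tdown (c *\<^sub>R x) = c *\<^sub>R Tdown x"
  by (simp add: Tdown_def scaleR_sum_right)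

lemma Tdown_diff: "Tdown (x - y) = Tdown x - Tdown y"
  by (simp add: Tdown_def scaleR_diff_left sum_subtractf)

lemma ev_in_corner: "ev v \<in> corner v \<mu>"
  unfolding corner_def by (rule hull_inc) simp

lemma evw_in_corner: "evw v w \<mu> \<in> corner v \<mu>"
proof (cases "w = v")
  case True
  then have "evw v w \<mu> = ev v" by (simp add: evw_def algebra_simps)
  then show ?thesis using ev_in_corner by simp
next
  case False
  then show ?thesis unfolding corner_def by (intro hull_inc) blast
qed

lemma corner_mem:
  assumes "y \<in> simplexS" "0 \<le> h" "h \<le> 1/4"
  shows "ev v + h *\<^sub>R (y - ev v) \<in> corner v (1/4)"
proof -
  have cv: "convex (corner v (1/4))" unfolding corner_def by (rule convex_convex_hull)
  define p where "p w = ev v + h *\<^sub>R (ev w - ev v)" for w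
  have p_eq: "p w = (1 - 4*h) *\<^sub>R ev v + (4*h) *\<^sub>R evw v w (1/4)" for w
    unfolding p_def evw_def by (simp add: vec_eq_iff ev_comp algebra_simps)
  have pin: "p w \<in> corner v (1/4)" for w
    unfolding p_eq using assms(2,3)
    by (intro convexD[OF cv ev_in_corner evw_in_corner]) auto
  have "(\<Sum>w\<in>UNIV. y$w *\<^sub>R p w) \<in> corner v (1/4)"
    by (rule convex_sum[OF finite cv]) (use simplex_props[OF assms(1)] pin in auto)
  moreover have "(\<Sum>w\<in>UNIV. y$w *\<^sub>R p w) = ev v + h *\<^sub>R (y - ev v)"
  proof -
    have "(\<Sum>w\<in>UNIV. y$w *\<^sub>R p w) = (\<Sum>w\<in>UNIV. y$w) *\<^sub>R ev v + h *\<^sub>R ((\<Sum>w\<in>UNIV. y$w *\<^sub>R ev w) - (\<Sum>w\<in>UNIV. y$w) *\<^sub>R ev v)"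
      unfolding p_def by (simp add: scaleR_add_right scaleR_diff_right sum.distrib sum_subtractf
          scaleR_sum_left scaleR_sum_right algebra_simps)
    also have "\<dots> = ev v + h *\<^sub>R (y - ev v)"
      using simplex_props(2)[OF assms(1)] vec_decomp[of y] by simp
    finally show ?thesis .
  qed
  ultimately show ?thesis by simp
qed

lemma dir_deriv:
  fixes lS :: "real^('q::finite \<times> ('d::finite \<Rightarrow> bool)) \<Rightarrow> real"
    and r :: "real^'d" and \<kappa> :: real
  assumes aff: "\<forall>z \<in> corner v (1/4). lS z = a \<bullet> z + c0"
    and y: "y \<in> simplexS"
  defines "\<Phi> \<equiv> (\<lambda>y. lS y + \<kappa> * (norm (r - Tdown y))^2)"
  defines "L \<equiv> a \<bullet> (y - ev v) - 2 * \<kappa> * ((r - Tdown (ev v)) \<bullet> Tdown (y - ev v))"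
  shows "has_dirderiv \<Phi> (ev v) (y - ev v) L" "dirderiv \<Phi> (ev v) (y - ev v) = L"
proof -
  define x where "x = ev v"
  define u where "u = y - ev v"
  define p where "p = r - Tdown x"
  define q where "q = Tdown u"
  define C where "C = \<kappa> * (q \<bullet> q)"
  have eq: "(\<Phi> (x + h *\<^sub>R u) - \<Phi> x) / h = L + h * C" if h: "0 < h" "h < 1/4" for h
  proof -
    have "x + h *\<^sub>R u \<in> corner v (1/4)" unfolding x_def u_def using corner_mem[OF y, of h v] h by simp
    then have l1: "lS (x + h *\<^sub>R u) = a \<bullet> (x + h *\<^sub>R u) + c0" using aff by blast
    have l0: "lS x = a \<bullet> x + c0" using aff ev_in_corner unfolding x_def by blast
    have t: "r - Tdown (x + h *\<^sub>R u) = p - h *\<^sub>R q"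
      unfolding p_def q_def Tdown_add Tdown_scale by simp
    have n1: "(norm (p - h *\<^sub>R q))^2 = p \<bullet> p - 2 * h * (p \<bullet> q) + h^2 * (q \<bullet> q)"
      unfolding power2_norm_eq_inner by (simp add: inner_diff_left inner_diff_right inner_commute power2_eq_square algebra_simps)
    have n0: "(norm p)^2 = p \<bullet> p" by (simp add: power2_norm_eq_inner)
    have "\<Phi> (x + h *\<^sub>R u) - \<Phi> x = h * (a \<bullet> u) + \<kappa> * (- 2 * h * (p \<bullet> q) + h^2 * (q \<bullet> q))"
      unfolding \<Phi>_def l1 l0 t n1 p_def[symmetric] n0 by (simp add: inner_add_right algebra_simps)
    also have "\<dots> = h * (L + h * C)"
      unfolding L_def C_def p_def q_def x_def u_def by (simp add: algebra_simps power2_eq_square)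
    finally show ?thesis using h by simp
  qed
  have ev1: "\<forall>\<^sub>F h in at_right 0. (\<Phi> (x + h *\<^sub>R u) - \<Phi> x) / h = L + h * C"
    unfolding eventually_at_right_field by (intro exI[of _ "1/4"]) (auto intro: eq)
  have lim: "((\<lambda>h. L + h * C) \<longlongrightarrow> L) (at_right (0::real))"
  proof -
    have "((\<lambda>h. L + h * C) \<longlongrightarrow> L + 0 * C) (at_right (0::real))"
      by (intro tendsto_intros)
    then show ?thesis by simp
  qed
  have hd: "((\<lambda>h. (\<Phi> (x + h *\<^sub>R u) - \<Phi> x) / h) \<longlongrightarrow> L) (at_right 0)"
    using tendsto_cong[OF ev1] lim by blast
  then show "has_dirderiv \<Phi> (ev v) (y - ev v) L" unfolding has_dirderiv_def x_def u_def .
  show "dirderiv \<Phi> (ev v) (y - ev v) = L"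
    unfolding dirderiv_def using tendsto_Lim[OF trivial_limit_at_right_real hd] unfolding x_def u_def .
qed

lemma num_case2:
  fixes b d m m' A n' :: real
  assumes "b > 0" "b > 4 * d" "d \<ge> 1" "0 \<le> m'" "m' \<le> d" "0 \<le> m" "n' \<le> A"
    "n' = A \<Longrightarrow> m' + 1 \<le> m" "n' \<noteq> A \<Longrightarrow> n' + 1 \<le> A"
  shows "0 < b * (m - m') + 4 * b^2 * (A - n')"
proof (cases "n' = A")
  case True
  then have "b * (m - m') \<ge> b * 1" using assms by (intro mult_left_mono) auto
  then show ?thesis using True assms(1) by simp
next
  case False
  then have "4 * b^2 * (A - n') \<ge> 4 * b^2 * 1" using assms by (intro mult_left_mono) auto
  moreover have "b * (m - m') \<ge> b * (- d)" using assms by (intro mult_left_mono) auto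
  moreover have "b * (4 * b - d) > 0" using assms by (intro mult_pos_pos) auto
  ultimately show ?thesis by (simp add: power2_eq_square algebra_simps)
qed

lemma num_case3:
  fixes b d m m'' A n' :: real
  assumes "b > 0" "b > 4 * d" "d \<ge> 1" "m'' \<le> d" "0 \<le> m" "n' \<le> A"
  shows "0 < 2*b^3 - 2*b*m'' + 4*b*m + 16*b^2*(A - n')"
proof -
  have "b * b \<ge> b * 1" using assms by (intro mult_left_mono) auto
  then have bb: "b * b \<ge> b" by simp
  have "b * b > m''" using bb assms by linarith
  then have "b^2 > m''" by (simp add: power2_eq_square)
  then have "2 * b * (b^2 - m'') > 0" using assms by (intro mult_pos_pos) auto
  moreover have "4*b*m \<ge> 0" using assms by simp
  moreover have "16*b^2*(A - n') \<ge> 0" using assms by simp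
  ultimately show ?thesis by (simp add: power3_eq_cube power2_eq_square algebra_simps)
qed

lemma b_big:
  fixes b d :: real
  assumes "b > 0" "d \<ge> 1" "b^3 / 2 - d * b \<ge> 2 * d * b^2"
  shows "b > 4 * d"
proof (rule ccontr)
  assume "\<not> b > 4 * d"
  then have "b \<le> 4 * d" by simp
  then have "b^2 * b \<le> b^2 * (4 * d)" using assms by (intro mult_left_mono) auto
  moreover have "d * b > 0" using assms by simp
  ultimately show False using assms(3) by (simp add: power3_eq_cube power2_eq_square algebra_simps)
qed

lemma deriv_quad:
  fixes K \<kappa> \<alpha> \<beta> s0 :: real
  assumes "\<And>s. f s = K + \<kappa> * (\<alpha> + \<beta> * s)^2"
  shows "deriv f s0 = 2 * \<kappa> * \<beta> * (\<alpha> + \<beta> * s0)"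
proof -
  have f: "f = (\<lambda>s. K + \<kappa> * (\<alpha> + \<beta> * s)^2)" using assms by (rule ext)
  have "((\<lambda>s. K + \<kappa> * (\<alpha> + \<beta> * s)^2) has_real_derivative 2 * \<kappa> * \<beta> * (\<alpha> + \<beta> * s0)) (at s0)"
    by (auto intro!: derivative_eq_intros simp: algebra_simps)
  then show ?thesis unfolding f by (rule DERIV_imp_deriv)
qed

lemma norm2_vec: "(norm (x::real^'d::finite))^2 = (\<Sum>j\<in>UNIV. (x$j)^2)"
  unfolding power2_norm_eq_inner inner_vec_def by (simp add: power2_eq_square)

lemma mgrad_T:
  fixes T H :: "'d::finite tmat" and cv :: "real^'d"
  assumes "inr tau i"
  shows "mgrad tau (\<lambda>T0. 1/2*\<gamma>*(norm (diagTH tau T0 H - cv))^2) T i j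
         = \<gamma> * (diagTH tau T H $ j - cv $ j) * H i j"
proof -
  define Ts where "Ts s = T(i := (T i)(j := s))" for s
  have iI: "i \<in> {0..<int tau}" using assms by (simp add: inr_def)
  have d_other: "diagTH tau (Ts s) H $ j' = diagTH tau T H $ j'" if "j' \<noteq> j" for s j'
    unfolding diagTH_def Ts_def using that by (auto intro!: sum.cong)
  have d_j: "diagTH tau (Ts s) H $ j = diagTH tau T H $ j - T i j * H i j + H i j * s" for s
  proof -
    have "diagTH tau (Ts s) H $ j = Ts s i j * H i j + (\<Sum>i'\<in>{0..<int tau} - {i}. Ts s i' j * H i' j)"
      unfolding diagTH_def by (simp add: sum.remove[OF finite_atLeastLessThan_int iI])
    also have "(\<Sum>i'\<in>{0..<int tau} - {i}. Ts s i' j * H i' j) = (\<Sum>i'\<in>{0..<int tau} - {i}. T i' j * H i' j)"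
      by (rule sum.cong) (auto simp: Ts_def)
    also have "\<dots> = diagTH tau T H $ j - T i j * H i j"
      unfolding diagTH_def by (simp add: sum.remove[OF finite_atLeastLessThan_int iI])
    finally show ?thesis by (simp add: Ts_def fun_upd_def algebra_simps)
  qed
  define K where "K = 1/2*\<gamma>*(\<Sum>j'\<in>UNIV - {j}. (diagTH tau T H $ j' - cv $ j')^2)"
  have fs: "1/2*\<gamma>*(norm (diagTH tau (Ts s) H - cv))^2
      = K + (1/2*\<gamma>) * ((diagTH tau T H $ j - T i j * H i j - cv $ j) + H i j * s)^2" for s
  proof -
    have "(norm (diagTH tau (Ts s) H - cv))^2
        = (diagTH tau (Ts s) H $ j - cv $ j)^2 + (\<Sum>j'\<in>UNIV - {j}. (diagTH tau (Ts s) H $ j' - cv $ j')^2)"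
      unfolding norm2_vec by (simp add: sum.remove[of UNIV j])
    also have "(\<Sum>j'\<in>UNIV - {j}. (diagTH tau (Ts s) H $ j' - cv $ j')^2) = (\<Sum>j'\<in>UNIV - {j}. (diagTH tau T H $ j' - cv $ j')^2)"
      by (rule sum.cong) (auto simp: d_other)
    finally show ?thesis unfolding K_def d_j by (simp add: algebra_simps)
  qed
  have "mgrad tau (\<lambda>T0. 1/2*\<gamma>*(norm (diagTH tau T0 H - cv))^2) T i j
      = deriv (\<lambda>s. 1/2*\<gamma>*(norm (diagTH tau (Ts s) H - cv))^2) (T i j)"
    unfolding mgrad_def Ts_def using assms by simp
  also have "\<dots> = 2 * (1/2*\<gamma>) * H i j * ((diagTH tau T H $ j - T i j * H i j - cv $ j) + H i j * T i j)"
    by (rule deriv_quad[OF fs])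
  also have "\<dots> = \<gamma> * (diagTH tau T H $ j - cv $ j) * H i j" by (simp add: algebra_simps)
  finally show ?thesis .
qed

lemma mgrad_H:
  fixes P H :: "'d::finite tmat"
  assumes "inr tau i"
  shows "mgrad tau (\<lambda>H0. 1/2*\<gamma>*fro2 tau (\<lambda>i j. P i j - H0 i j)) H i j = - \<gamma> * (P i j - H i j)"
proof -
  define Hs where "Hs s = H(i := (H i)(j := s))" for s
  have iI: "i \<in> {0..<int tau}" using assms by (simp add: inr_def)
  define K where "K = 1/2*\<gamma>*((\<Sum>i'\<in>{0..<int tau} - {i}. \<Sum>j'\<in>UNIV. (P i' j' - H i' j')^2)
       + (\<Sum>j'\<in>UNIV - {j}. (P i j' - H i j')^2))"
  have fs: "1/2*\<gamma>*fro2 tau (\<lambda>i j. P i j - Hs s i j) = K + (1/2*\<gamma>) * (P i j + (-1) * s)^2" for s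
  proof -
    have "fro2 tau (\<lambda>i j. P i j - Hs s i j)
       = (\<Sum>j'\<in>UNIV. (P i j' - Hs s i j')^2) + (\<Sum>i'\<in>{0..<int tau} - {i}. \<Sum>j'\<in>UNIV. (P i' j' - Hs s i' j')^2)"
      unfolding fro2_def by (simp add: sum.remove[OF finite_atLeastLessThan_int iI])
    also have "(\<Sum>i'\<in>{0..<int tau} - {i}. \<Sum>j'\<in>UNIV. (P i' j' - Hs s i' j')^2)
        = (\<Sum>i'\<in>{0..<int tau} - {i}. \<Sum>j'\<in>UNIV. (P i' j' - H i' j')^2)"
      by (rule sum.cong) (auto simp: Hs_def)
    also have "(\<Sum>j'\<in>UNIV. (P i j' - Hs s i j')^2) = (P i j - s)^2 + (\<Sum>j'\<in>UNIV - {j}. (P i j' - Hs s i j')^2)"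
      by (simp add: sum.remove[of UNIV j] Hs_def)
    also have "(\<Sum>j'\<in>UNIV - {j}. (P i j' - Hs s i j')^2) = (\<Sum>j'\<in>UNIV - {j}. (P i j' - H i j')^2)"
      by (rule sum.cong) (auto simp: Hs_def)
    finally show ?thesis unfolding K_def by (simp add: algebra_simps)
  qed
  have "mgrad tau (\<lambda>H0. 1/2*\<gamma>*fro2 tau (\<lambda>i j. P i j - H0 i j)) H i j
      = deriv (\<lambda>s. 1/2*\<gamma>*fro2 tau (\<lambda>i j. P i j - Hs s i j)) (H i j)"
    unfolding mgrad_def Hs_def using assms by simp
  also have "\<dots> = 2 * (1/2*\<gamma>) * (-1) * (P i j + (-1) * H i j)"
    by (rule deriv_quad[OF fs])
  also have "\<dots> = - \<gamma> * (P i j - H i j)" by (simp add: algebra_simps)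
  finally show ?thesis .
qed

lemma E_lin:
  fixes a :: "real^('q::finite \<times> ('d::finite \<Rightarrow> bool))" and p :: "real^'d"
  shows "a \<bullet> y - k * (p \<bullet> Tdown y) = (\<Sum>w\<in>UNIV. y$w * (a$w - k * (p \<bullet> symv (snd w))))"
proof -
  have "a \<bullet> y = (\<Sum>w\<in>UNIV. y$w * a$w)" by (simp add: inner_vec_def mult.commute)
  moreover have "p \<bullet> Tdown y = (\<Sum>w\<in>UNIV. y$w * (p \<bullet> symv (snd w)))"
    unfolding Tdown_def by (simp add: inner_sum_right)
  ultimately show ?thesis
    by (simp add: sum_subtractf sum_distrib_left algebra_simps)
qed

lemma min_simplex:
  fixes e :: "'v::finite \<Rightarrow> real"
  assumes y: "y \<in> simplexS" and ne: "y \<noteq> ev w0" and gt: "\<And>w. w \<noteq> w0 \<Longrightarrow> e w > e w0"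
  shows "(\<Sum>w\<in>UNIV. y$w * e w) > e w0"
proof -
  have y0: "\<And>w. 0 \<le> y$w" and y1: "(\<Sum>w\<in>UNIV. y$w) = 1" using simplex_props[OF y] by blast+
  have "\<exists>w1. w1 \<noteq> w0 \<and> y$w1 > 0"
  proof (rule ccontr)
    assume nex: "\<not> (\<exists>w1. w1 \<noteq> w0 \<and> y$w1 > 0)"
    have z: "y$w = 0" if "w \<noteq> w0" for w
      using nex that y0[of w] by force
    then have "(\<Sum>w\<in>UNIV. y$w) = y$w0"
      by (simp add: sum.remove[of UNIV w0])
    then have "y$w0 = 1" using y1 by simp
    then have "y = ev w0" using z by (auto simp: vec_eq_iff ev_comp)
    then show False using ne by simp
  qed
  then obtain w1 where w1: "w1 \<noteq> w0" "y$w1 > 0" by blast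
  have "(\<Sum>w\<in>UNIV. y$w * e w) - e w0 = (\<Sum>w\<in>UNIV. y$w * (e w - e w0))"
  proof -
    have "(\<Sum>w\<in>UNIV. e w0 * y$w) = e w0" using y1 by (simp add: sum_distrib_left[symmetric])
    then show ?thesis by (simp add: algebra_simps sum_subtractf)
  qed
  also have "\<dots> > 0"
  proof (rule sum_pos2[of UNIV w1])
    show "0 < y$w1 * (e w1 - e w0)" using w1 gt[OF w1(1)] by simp
    show "\<And>w. w \<in> UNIV \<Longrightarrow> 0 \<le> y$w * (e w - e w0)"
      using y0 gt by (metis diff_ge_0_iff_ge less_eq_real_def mult_nonneg_nonneg)
  qed auto
  finally show ?thesis by simp
qed

lemma card_split: "real (card {j::'d::finite. P j}) + real (card {j. \<not> P j}) = real CARD('d)"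
proof -
  have "card {j::'d. P j} + card {j. \<not> P j} = card ({j. P j} \<union> {j. \<not> P j})"
    by (rule card_Un_disjoint[symmetric]) auto
  also have "{j::'d. P j} \<union> {j. \<not> P j} = UNIV" by auto
  finally show ?thesis by (metis of_nat_add)
qed

lemma evw_sym: "evw v w (1/4) = evw w v (3/4)"
  by (simp add: evw_def vec_eq_iff ev_comp)

lemma evw_self: "evw v v \<mu> = ev v"
  by (simp add: evw_def vec_eq_iff ev_comp algebra_simps)

lemma lS_okD:
  assumes "lS_ok F \<delta>1 b \<gamma> lS"
  shows "affine_on (corner v (1/4)) lS"
    and "lS (ev v) = wv F b \<gamma> v"
    and "(v, w) \<in> edges \<delta>1 \<Longrightarrow> lS (evw v w (1/4)) = wvw b \<gamma> v w"
    and "(v, w) \<in> edges \<delta>1 \<Longrightarrow> lS (evw v w (3/4)) = wvw b \<gamma> v w / 2"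
    and "v \<noteq> w \<Longrightarrow> (v, w) \<notin> edges \<delta>1 \<Longrightarrow> (w, v) \<notin> edges \<delta>1 \<Longrightarrow> lS (evw v w (1/4)) = 0"
proof -
  have C1: "\<forall>v. affine_on (corner v (1/4)) lS"
    using assms unfolding lS_ok_def by (rule conjunct1)
  have C2: "\<forall>v. lS (ev v) = wv F b \<gamma> v"
    using assms unfolding lS_ok_def by (rule conjunct1[OF conjunct2])
  have C3: "\<forall>v w. (v, w) \<in> edges \<delta>1 \<longrightarrow>
        lS (evw v w (1/4)) = wvw b \<gamma> v w \<and> lS (evw v w (3/4)) = wvw b \<gamma> v w / 2"
    using assms unfolding lS_ok_def by (rule conjunct1[OF conjunct2[OF conjunct2]])
  have C4: "\<forall>v w. v \<noteq> w \<and> (v, w) \<notin> edges \<delta>1 \<and> (w, v) \<notin> edges \<delta>1 \<longrightarrow>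
        lS (evw v w (1/4)) = 0 \<and> lS (evw v w (3/4)) = 0"
    using assms unfolding lS_ok_def by (rule conjunct2[OF conjunct2[OF conjunct2]])
  show "affine_on (corner v (1/4)) lS" using C1 by blast
  show "lS (ev v) = wv F b \<gamma> v" using C2 by blast
  show "(v, w) \<in> edges \<delta>1 \<Longrightarrow> lS (evw v w (1/4)) = wvw b \<gamma> v w" using C3 by blast
  show "(v, w) \<in> edges \<delta>1 \<Longrightarrow> lS (evw v w (3/4)) = wvw b \<gamma> v w / 2" using C3 by blast
  show "v \<noteq> w \<Longrightarrow> (v, w) \<notin> edges \<delta>1 \<Longrightarrow> (w, v) \<notin> edges \<delta>1 \<Longrightarrow> lS (evw v w (1/4)) = 0"
    using C4 by blast
qed

lemma gap_lemma:
  fixes lS :: "real^('q::finite \<times> ('d::finite \<Rightarrow> bool)) \<Rightarrow> real"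
    and t s :: "'d \<Rightarrow> bool"
  assumes no_2cycle: "\<forall>v w. \<not> ((v, w) \<in> edges \<delta>1 \<and> (w, v) \<in> edges \<delta>1)"
    and gamma_pos: "\<gamma> > 0" and b_pos: "b > 0"
    and b2: "b^3 / 2 - real CARD('d) * b \<ge> 2 * real CARD('d) * b^2"
    and lS: "lS_ok F \<delta>1 b \<gamma> lS" and qF: "q \<notin> F" and q1: "q1 = \<delta>1 q t"
    and wne: "w \<noteq> (q1, s)"
  shows "4 * lS (evw (q,t) (q1,s) (1/4)) - 16*b^2*\<gamma> * real (card {j. s j \<noteq> t j \<and> s j \<noteq> t j})
       < 4 * lS (evw (q,t) w (1/4)) - 16*b^2*\<gamma> * real (card {j. s j \<noteq> t j \<and> snd w j \<noteq> t j})"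
proof -
  define d where "d = real CARD('d)"
  have d1: "d \<ge> 1" unfolding d_def by simp
  have bb: "b > 4 * d" using b_big[OF b_pos d1] b2 unfolding d_def by simp
  define v where "v = (q, t)"
  define ws where "ws = (q1, s)"
  have E: "(v, ws) \<in> edges \<delta>1" unfolding v_def ws_def edges_def q1 by simp
  have L1: "lS (evw v ws (1/4)) = wvw b \<gamma> v ws" by (rule lS_okD(3)[OF lS E])
  define m where "m = real (card {j. s j = t j})"
  define A where "A = real (card {j. s j \<noteq> t j})"
  have mA: "m + A = d" unfolding m_def A_def d_def using card_split[of "\<lambda>j. s j = t j"] by simp
  have m0: "m \<ge> 0" "A \<ge> 0" unfolding m_def A_def by simp_all
  have gws: "4 * lS (evw v ws (1/4)) - 16*b^2*\<gamma> * real (card {j. s j \<noteq> t j \<and> s j \<noteq> t j})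
      = - 4 * (b^3 + b * m) * \<gamma> - 16*b^2*\<gamma> * A"
    using L1 unfolding wvw_def m_def A_def v_def ws_def by simp
  define t' where "t' = snd w"
  define n' where "n' = real (card {j. s j \<noteq> t j \<and> t' j \<noteq> t j})"
  have "card {j. s j \<noteq> t j \<and> t' j \<noteq> t j} \<le> card {j. s j \<noteq> t j}" by (rule card_mono) auto
  then have nA: "n' \<le> A" unfolding n'_def A_def by simp
  have "- 4 * (b^3 + b * m) * \<gamma> - 16*b^2*\<gamma> * A < 4 * lS (evw v w (1/4)) - 16*b^2*\<gamma> * n'"
  proof (cases "(v, w) \<in> edges \<delta>1")
    case True
    then have fw: "fst w = q1" unfolding edges_def v_def q1 by simp
    have ts: "t' \<noteq> s" using wne fw unfolding t'_def by (metis prod.collapse)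
    have L: "lS (evw v w (1/4)) = wvw b \<gamma> v w" by (rule lS_okD(3)[OF lS True])
    define m' where "m' = real (card {j. t' j = t j})"
    have Lw: "lS (evw v w (1/4)) = - (b^3 + b * m') * \<gamma>"
      using L unfolding wvw_def m'_def t'_def v_def by simp
    have m'd: "m' \<le> d" unfolding m'_def d_def using card_le_CARD by simp
    have m'0: "0 \<le> m'" unfolding m'_def by simp
    have c1: "n' = A \<Longrightarrow> m' + 1 \<le> m"
    proof -
      assume nA': "n' = A"
      have sub: "{j. s j \<noteq> t j \<and> t' j \<noteq> t j} \<subseteq> {j. s j \<noteq> t j}" by auto
      have eqs: "{j. s j \<noteq> t j \<and> t' j \<noteq> t j} = {j. s j \<noteq> t j}"
        using nA' unfolding n'_def A_def by (intro card_subset_eq[OF _ sub]) auto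
      obtain j0 where j0: "t' j0 \<noteq> s j0" using ts by blast
      have "{j. t' j = t j} \<subset> {j. s j = t j}"
      proof
        show "{j. t' j = t j} \<subseteq> {j. s j = t j}" using eqs by blast
        have "s j0 = t j0"
        proof (rule ccontr)
          assume "s j0 \<noteq> t j0"
          then have "j0 \<in> {j. s j \<noteq> t j \<and> t' j \<noteq> t j}" using eqs by blast
          then show False using j0 by auto
        qed
        then show "{j. t' j = t j} \<noteq> {j. s j = t j}" using j0 by blast
      qed
      then have "card {j. t' j = t j} < card {j. s j = t j}" by (intro psubset_card_mono) auto
      then show "m' + 1 \<le> m" unfolding m'_def m_def by linarith
    qed
    have c2: "n' \<noteq> A \<Longrightarrow> n' + 1 \<le> A"
    proof -
      assume "n' \<noteq> A"
      then have "card {j. s j \<noteq> t j \<and> t' j \<noteq> t j} < card {j. s j \<noteq> t j}"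
        using nA unfolding n'_def A_def by linarith
      then show ?thesis unfolding n'_def A_def by linarith
    qed
    have pos: "0 < b * (m - m') + 4 * b^2 * (A - n')"
      by (rule num_case2[OF b_pos bb d1 m'0 m'd m0(1) nA c1 c2])
    have "(4 * lS (evw v w (1/4)) - 16*b^2*\<gamma> * n') - (- 4 * (b^3 + b * m) * \<gamma> - 16*b^2*\<gamma> * A)
        = 4 * \<gamma> * (b * (m - m') + 4 * b^2 * (A - n'))"
      unfolding Lw by (simp add: algebra_simps)
    also have "\<dots> > 0" using pos gamma_pos by simp
    finally show ?thesis by simp
  next
    case False
    show ?thesis
    proof (cases "(w, v) \<in> edges \<delta>1")
      case True
      have L: "lS (evw w v (3/4)) = wvw b \<gamma> w v / 2" by (rule lS_okD(4)[OF lS True])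
      define m'' where "m'' = real (card {j. t j = t' j})"
      have Lw: "lS (evw v w (1/4)) = - (b^3 + b * m'') * \<gamma> / 2"
        using L unfolding evw_sym wvw_def m''_def t'_def v_def by simp
      have m''d: "m'' \<le> d" unfolding m''_def d_def using card_le_CARD by simp
      have pos: "0 < 2*b^3 - 2*b*m'' + 4*b*m + 16*b^2*(A - n')"
        by (rule num_case3[OF b_pos bb d1 m''d m0(1) nA])
      have "(4 * lS (evw v w (1/4)) - 16*b^2*\<gamma> * n') - (- 4 * (b^3 + b * m) * \<gamma> - 16*b^2*\<gamma> * A)
          = \<gamma> * (2*b^3 - 2*b*m'' + 4*b*m + 16*b^2*(A - n'))"
        unfolding Lw by (simp add: field_simps)
      also have "\<dots> > 0" using pos gamma_pos by simp
      finally show ?thesis by simp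
    next
      case False2: False
      have Lw: "lS (evw v w (1/4)) = 0"
      proof (cases "w = v")
        case True
        then have "evw v w (1/4) = ev v" by (simp add: evw_self)
        moreover have "lS (ev v) = wv F b \<gamma> v" by (rule lS_okD(2)[OF lS])
        ultimately show ?thesis using qF unfolding wv_def v_def by simp
      next
        case False3: False
        then show ?thesis using lS_okD(5)[OF lS _ False False2] False3 by simp
      qed
      have pos: "0 < 4*b^3 + 4*b*m + 16*b^2*(A - n')"
      proof -
        have "0 < 4*b^3" using b_pos by simp
        moreover have "0 \<le> 4*b*m" using b_pos m0 by simp
        moreover have "0 \<le> 16*b^2*(A - n')" using nA by simp
        ultimately show ?thesis by linarith
      qed
      have "(4 * lS (evw v w (1/4)) - 16*b^2*\<gamma> * n') - (- 4 * (b^3 + b * m) * \<gamma> - 16*b^2*\<gamma> * A)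
          = \<gamma> * (4*b^3 + 4*b*m + 16*b^2*(A - n'))"
        unfolding Lw by (simp add: algebra_simps)
      also have "\<dots> > 0" using pos gamma_pos by simp
      finally show ?thesis by simp
    qed
  qed
  then show ?thesis using gws unfolding v_def ws_def n'_def t'_def by simp
qed

lemma step_iter:
  fixes T H :: "'d::finite tmat" and q :: "'q::finite"
    and lS :: "real^('q \<times> ('d \<Rightarrow> bool)) \<Rightarrow> real"
  assumes valid: "valid_config tau T H" "heads_interior tau H"
    and no_2cycle: "\<forall>v w. \<not> ((v, w) \<in> edges \<delta>1 \<and> (w, v) \<in> edges \<delta>1)"
    and gamma_pos: "\<gamma> > 0" and b_pos: "b > 0"
    and b2: "b^3 / 2 - real CARD('d) * b \<ge> 2 * real CARD('d) * b^2"
    and lS: "lS_ok F \<delta>1 b \<gamma> lS" and qF: "q \<notin> F"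
    and tdef: "t = readsym tau T H"
    and T'def: "T' = (\<lambda>i j. if j \<in> RO then T i j else T i j + H i j * (sym (\<delta>2 q t j) - sym (t j)))"
    and H'def: "H' = shift_e tau \<delta>3 (q, t) H"
  shows "iter_step tau RO \<delta>2 \<delta>3 \<gamma> b lS (ev (q, t)) T H (ev (\<delta>1 q t, readsym tau T' H')) T' H'"
proof -
  obtain h where h1: "\<And>j. inr tau (h j)" and h2: "\<And>i j. H i j = (if i = h j then 1 else 0)"
    and h3: "\<And>j. 0 < h j" and h4: "\<And>j. h j < int tau - 1"
    and T1: "\<And>i j. inr tau i \<Longrightarrow> T i j = 1 \<or> T i j = -1"
    and T0: "\<And>i j. \<not> inr tau i \<Longrightarrow> T i j = 0"
    by (rule config_facts[OF valid]) blast
  define v where "v = (q, t)"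
  define x where "x = ev v"
  define h' where "h' j = h j - move (\<delta>3 (fst v) (snd v) j)" for j
  have H'i: "H' i j = (if i = h' j then 1 else 0)" for i j
    unfolding H'def h'_def v_def[symmetric] by (rule shift_ind(1)[OF h2 h1 h3 h4])
  have h'1: "inr tau (h' j)" for j unfolding h'_def by (rule shift_ind(2)[OF h2 h1 h3 h4])
  have h'2: "h' j \<noteq> h j" for j unfolding h'_def by (rule shift_ind(3)[OF h2 h1 h3 h4])
  have D0: "diagTH tau T H $ j = T (h j) j" for j by (rule diagTH_ind[OF h2 h1])
  have D1: "diagTH tau T H' $ j = T (h' j) j" for j by (rule diagTH_ind[OF H'i h'1])
  have St: "symv t = diagTH tau T H" unfolding tdef
    by (rule symv_readsym) (simp add: D0 T1[OF h1])
  define s where "s = readsym tau T H'"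
  have Ss: "symv s = diagTH tau T H'" unfolding s_def
    by (rule symv_readsym) (simp add: D1 T1[OF h'1])
  have D2: "diagTH tau T' H' $ j = T (h' j) j" for j
  proof -
    have "diagTH tau T' H' $ j = T' (h' j) j" by (rule diagTH_ind[OF H'i h'1])
    also have "\<dots> = T (h' j) j" unfolding T'def using h2[of "h' j" j] h'2[of j] by simp
    finally show ?thesis .
  qed
  have s': "readsym tau T' H' = s" unfolding s_def readsym_def by (simp add: D1 D2)
  define ws where "ws = (\<delta>1 q t, s)"
  have SH: "shiftS tau \<delta>3 x H = H'" unfolding x_def H'def v_def by (rule shiftS_ev)
  define r where "r = diagTH tau T (shiftS tau \<delta>3 x H)"
  have rs: "r = symv s" unfolding r_def SH Ss ..
  have Tx: "Tdown x = symv t" unfolding x_def v_def Tdown_ev by simp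
  define \<Phi> where "\<Phi> = (\<lambda>y. lS y + 2 * b^2 * \<gamma> * (norm (r - Tdown y))^2)"
  obtain a c0 where aff: "\<forall>z\<in>corner v (1/4). lS z = a \<bullet> z + c0"
    using lS_okD(1)[OF lS, of v] unfolding affine_on_def by blast
  have lSv: "lS (ev v) = 0" using lS_okD(2)[OF lS, of v] qF unfolding wv_def v_def by simp
  define p where "p = r - Tdown x"
  have pst: "p = symv s - symv t" unfolding p_def rs Tx ..
  define e where "e w = a$w - 4*b^2*\<gamma> * (p \<bullet> symv (snd w))" for w
  have dd: "dirderiv \<Phi> x (y - x) = (\<Sum>w\<in>UNIV. y$w * e w) - e v" if y: "y \<in> simplexS" for y
  proof -
    have "dirderiv \<Phi> x (y - x) = a \<bullet> (y - ev v) - 2 * (2 * b^2 * \<gamma>) * ((r - Tdown (ev v)) \<bullet> Tdown (y - ev v))"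
      unfolding \<Phi>_def x_def by (rule dir_deriv(2)[OF aff y])
    also have "\<dots> = (a \<bullet> y - (4*b^2*\<gamma>) * (p \<bullet> Tdown y)) - (a \<bullet> ev v - (4*b^2*\<gamma>) * (p \<bullet> Tdown (ev v)))"
      unfolding p_def x_def Tdown_diff by (simp add: inner_diff_right algebra_simps)
    also have "\<dots> = (\<Sum>w\<in>UNIV. y$w * e w) - (\<Sum>w\<in>UNIV. (ev v)$w * e w)"
      unfolding E_lin e_def ..
    also have "(\<Sum>w\<in>UNIV. (ev v)$w * e w) = e v" by (simp add: ev_comp)
    finally show ?thesis .
  qed
  have ev_e: "e w = e v + (4 * lS (evw v w (1/4)) - 16*b^2*\<gamma> * real (card {j. s j \<noteq> t j \<and> snd w j \<noteq> t j}))" for w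
  proof -
    have "lS (evw v w (1/4)) = a \<bullet> evw v w (1/4) + c0" using aff evw_in_corner by blast
    moreover have "lS (ev v) = a \<bullet> ev v + c0" using aff ev_in_corner by blast
    moreover have "a \<bullet> evw v w (1/4) = (3/4) * a$v + (1/4) * a$w"
      unfolding evw_def ev_def by (simp add: inner_add_right inner_axis)
    moreover have "a \<bullet> ev v = a$v" unfolding ev_def by (simp add: inner_axis)
    ultimately have A: "a$w - a$v = 4 * lS (evw v w (1/4))" using lSv by simp
    have "p \<bullet> symv (snd w) - p \<bullet> symv (snd v) = 4 * real (card {j. s j \<noteq> t j \<and> snd w j \<noteq> t j})"
      unfolding pst v_def using symv_inner[of s t "snd w"] by (simp add: inner_diff_right)
    then show ?thesis unfolding e_def using A by (simp add: algebra_simps)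
  qed
  have gt: "e w > e ws" if "w \<noteq> ws" for w
  proof -
    have "4 * lS (evw (q,t) (\<delta>1 q t, s) (1/4)) - 16*b^2*\<gamma> * real (card {j. s j \<noteq> t j \<and> s j \<noteq> t j})
       < 4 * lS (evw (q,t) w (1/4)) - 16*b^2*\<gamma> * real (card {j. s j \<noteq> t j \<and> snd w j \<noteq> t j})"
      by (rule gap_lemma[OF no_2cycle gamma_pos b_pos b2 lS qF refl]) (use that ws_def in simp)
    then show ?thesis using ev_e[of w] ev_e[of ws] unfolding ws_def v_def by simp
  qed
  have G1: "\<forall>y\<in>simplexS. \<exists>L. has_dirderiv \<Phi> x (y - x) L"
  proof
    fix y :: "real^('q \<times> ('d \<Rightarrow> bool))" assume y: "y \<in> simplexS"
    show "\<exists>L. has_dirderiv \<Phi> x (y - x) L"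
      unfolding \<Phi>_def x_def using dir_deriv(1)[OF aff y] by blast
  qed
  have G2: "ev ws \<in> simplexS" by (rule ev_in_simplex)
  have G3: "\<forall>y\<in>simplexS. y \<noteq> ev ws \<longrightarrow> dirderiv \<Phi> x (ev ws - x) < dirderiv \<Phi> x (y - x)"
  proof (intro ballI impI)
    fix y :: "real^('q \<times> ('d \<Rightarrow> bool))" assume y: "y \<in> simplexS" and ne: "y \<noteq> ev ws"
    have "dirderiv \<Phi> x (ev ws - x) = e ws - e v" unfolding dd[OF G2] by (simp add: ev_comp)
    moreover have "(\<Sum>w\<in>UNIV. y$w * e w) > e ws" by (rule min_simplex[where e=e, OF y ne gt])
    ultimately show "dirderiv \<Phi> x (ev ws - x) < dirderiv \<Phi> x (y - x)" unfolding dd[OF y] by simp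
  qed
  define fT where "fT = (\<lambda>T0. 1/2 * \<gamma> * (norm (diagTH tau T0 H - Tcurv \<delta>2 x))^2)"
  have G4: "T' = (\<lambda>i j. T i j - (1/\<gamma>) * (if j \<in> RO then 0 else mgrad tau fT T i j))"
  proof (intro ext)
    fix i j
    show "T' i j = T i j - (1/\<gamma>) * (if j \<in> RO then 0 else mgrad tau fT T i j)"
    proof (cases "j \<in> RO")
      case True then show ?thesis unfolding T'def by simp
    next
      case False
      show ?thesis
      proof (cases "inr tau i")
        case True
        have "mgrad tau fT T i j = \<gamma> * (diagTH tau T H $ j - Tcurv \<delta>2 x $ j) * H i j"
          unfolding fT_def by (rule mgrad_T[OF True])
        moreover have "diagTH tau T H $ j = sym (t j)" unfolding St[symmetric] symv_def by simp
        moreover have "Tcurv \<delta>2 x $ j = sym (\<delta>2 q t j)" unfolding x_def v_def Tcurv_ev symv_def by simp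
        ultimately have mg: "mgrad tau fT T i j = \<gamma> * (sym (t j) - sym (\<delta>2 q t j)) * H i j" by simp
        have "(1/\<gamma>) * (\<gamma> * (sym (t j) - sym (\<delta>2 q t j)) * H i j) = (sym (t j) - sym (\<delta>2 q t j)) * H i j"
          using gamma_pos by simp
        then show ?thesis unfolding T'def mg using False by (simp add: algebra_simps)
      next
        case False2: False
        have "H i j = 0" using h2[of i j] h1[of j] False2 by auto
        moreover have "mgrad tau fT T i j = 0" unfolding mgrad_def using False2 by simp
        ultimately show ?thesis unfolding T'def by simp
      qed
    qed
  qed
  define P where "P = shiftS tau \<delta>3 x H"
  define fH where "fH = (\<lambda>H0. 1/2 * \<gamma> * fro2 tau (\<lambda>i j. P i j - H0 i j))"
  have G5: "H' = (\<lambda>i j. H i j - (1/\<gamma>) * mgrad tau fH H i j)"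
  proof (intro ext)
    fix i j
    show "H' i j = H i j - (1/\<gamma>) * mgrad tau fH H i j"
    proof (cases "inr tau i")
      case True
      have "mgrad tau fH H i j = - \<gamma> * (P i j - H i j)" unfolding fH_def by (rule mgrad_H[OF True])
      then show ?thesis unfolding P_def SH using gamma_pos by simp
    next
      case False
      have "H i j = 0" using h2[of i j] h1[of j] False by auto
      moreover have "H' i j = 0" unfolding H'def shift_e_def using False by simp
      moreover have "mgrad tau fH H i j = 0" unfolding mgrad_def using False by simp
      ultimately show ?thesis by simp
    qed
  qed
  show ?thesis
    unfolding iter_step_def Let_def s' ws_def[symmetric] v_def[symmetric] x_def[symmetric]
    unfolding r_def[symmetric]
    unfolding \<Phi>_def[symmetric] fT_def[symmetric]
    unfolding P_def[symmetric]
    unfolding fH_def[symmetric]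
    using G1 G2 G3 G4 G5 by blast
qed

lemma bound_num:
  fixes \<gamma> b d n1 n2 :: real
  assumes "\<gamma> > 0" "0 \<le> n1" "n1 \<le> d" "0 \<le> n2" "n2 \<le> d"
  shows "0 \<le> 2*\<gamma>*n1 + 8*b^2*\<gamma>*n2 + \<gamma>*d"
    and "2*\<gamma>*n1 + 8*b^2*\<gamma>*n2 + \<gamma>*d \<le> 8*b^2*d*\<gamma> + 3*d*\<gamma>"
proof -
  have a: "2*\<gamma>*n1 \<le> 2*\<gamma>*d" using assms by (intro mult_left_mono) auto
  have b: "(8*b^2*\<gamma>)*n2 \<le> (8*b^2*\<gamma>)*d" using assms by (intro mult_left_mono) auto
  have c: "0 \<le> (8*b^2*\<gamma>)*n2" using assms by simp
  show "0 \<le> 2*\<gamma>*n1 + 8*b^2*\<gamma>*n2 + \<gamma>*d" using assms c by simp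
  show "2*\<gamma>*n1 + 8*b^2*\<gamma>*n2 + \<gamma>*d \<le> 8*b^2*d*\<gamma> + 3*d*\<gamma>" using a b by (simp add: algebra_simps)
qed

theorem mainTheorem3:
  fixes tau :: nat
    and F :: "'q::finite set"
    and RO :: "'d::finite set"
    and \<delta>1 :: "'q \<Rightarrow> ('d \<Rightarrow> bool) \<Rightarrow> 'q"
    and \<delta>2 \<delta>3 :: "'q \<Rightarrow> ('d \<Rightarrow> bool) \<Rightarrow> ('d \<Rightarrow> bool)"
    and \<gamma> b c :: real
    and lS :: "real^('q \<times> ('d \<Rightarrow> bool)) \<Rightarrow> real"
    and K :: nat
    and q :: "nat \<Rightarrow> 'q"
    and T H :: "nat \<Rightarrow> 'd tmat"
  assumes no_2cycle: "\<forall>v w. \<not> ((v, w) \<in> edges \<delta>1 \<and> (w, v) \<in> edges \<delta>1)"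
    and gamma_pos: "\<gamma> > 0"
    and b_pos: "b > 0"
    and b1: "b^3 \<ge> (b^3 + real CARD('d) * b) / 2"
    and b2: "b^3 / 2 - real CARD('d) * b \<ge> 2 * real CARD('d) * b^2"
    and b3: "b^2 > b"
    and lS: "lS_ok F \<delta>1 b \<gamma> lS"
    and valid: "\<forall>k\<le>K. valid_config tau (T k) (H k) \<and> heads_interior tau (H k)"
    and steps: "\<forall>k<K. tm_step tau RO \<delta>1 \<delta>2 \<delta>3 (q k, T k, H k) = (q (Suc k), T (Suc k), H (Suc k))"
    and nonhalt: "\<forall>k<K. q k \<notin> F"
    and halt: "q K \<in> F"
  shows "(\<forall>k<K. iter_step tau RO \<delta>2 \<delta>3 \<gamma> b lS
              (ev (q k, readsym tau (T k) (H k))) (T k) (H k)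
              (ev (q (Suc k), readsym tau (T (Suc k)) (H (Suc k)))) (T (Suc k)) (H (Suc k)))
       \<and> (\<forall>k<K. c \<le> loss tau \<delta>2 \<delta>3 \<gamma> b c lS (ev (q k, readsym tau (T k) (H k))) (T k) (H k)
              \<and> loss tau \<delta>2 \<delta>3 \<gamma> b c lS (ev (q k, readsym tau (T k) (H k))) (T k) (H k)
                  \<le> c + 8 * b^2 * real CARD('d) * \<gamma> + 3 * real CARD('d) * \<gamma>)
       \<and> loss tau \<delta>2 \<delta>3 \<gamma> b c lS (ev (q K, readsym tau (T K) (H K))) (T K) (H K)
            \<le> c + 8 * b^2 * real CARD('d) * \<gamma> + 3 * real CARD('d) * \<gamma> - b^3 * \<gamma>"
proof (intro conjI allI impI)
  fix k assume k: "k < K"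
  have vk: "valid_config tau (T k) (H k)" "heads_interior tau (H k)" using valid k by auto
  define t where "t = readsym tau (T k) (H k)"
  have "tm_step tau RO \<delta>1 \<delta>2 \<delta>3 (q k, T k, H k)
     = (\<delta>1 (q k) t, (\<lambda>i j. if j \<in> RO then T k i j else T k i j + H k i j * (sym (\<delta>2 (q k) t j) - sym (t j))),
        shift_e tau \<delta>3 (q k, t) (H k))"
    unfolding tm_step_def t_def by (simp add: Let_def)
  then have eqs: "q (Suc k) = \<delta>1 (q k) t"
      "T (Suc k) = (\<lambda>i j. if j \<in> RO then T k i j else T k i j + H k i j * (sym (\<delta>2 (q k) t j) - sym (t j)))"
      "H (Suc k) = shift_e tau \<delta>3 (q k, t) (H k)"
    using steps k by auto
  have qF: "q k \<notin> F" using nonhalt k by auto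
  show "iter_step tau RO \<delta>2 \<delta>3 \<gamma> b lS
              (ev (q k, readsym tau (T k) (H k))) (T k) (H k)
              (ev (q (Suc k), readsym tau (T (Suc k)) (H (Suc k)))) (T (Suc k)) (H (Suc k))"
    unfolding eqs(1) t_def[symmetric]
    by (rule step_iter[OF vk no_2cycle gamma_pos b_pos b2 lS qF t_def]) (rule eqs(2), rule eqs(3))
  obtain n1 n2 :: nat where n: "n1 \<le> CARD('d)" "n2 \<le> CARD('d)"
    "loss tau \<delta>2 \<delta>3 \<gamma> b c lS (ev (q k, readsym tau (T k) (H k))) (T k) (H k)
       = c + lS (ev (q k, readsym tau (T k) (H k))) + 2*\<gamma>*real n1 + 8*b^2*\<gamma>*real n2 + \<gamma> * real CARD('d)"
    using loss_eval[OF vk] by blast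
  have l0: "lS (ev (q k, readsym tau (T k) (H k))) = 0"
    using lS_okD(2)[OF lS] qF unfolding wv_def by simp
  have B: "0 \<le> 2*\<gamma>*real n1 + 8*b^2*\<gamma>*real n2 + \<gamma>*real CARD('d)"
    "2*\<gamma>*real n1 + 8*b^2*\<gamma>*real n2 + \<gamma>*real CARD('d) \<le> 8*b^2*real CARD('d)*\<gamma> + 3*real CARD('d)*\<gamma>"
    using bound_num[OF gamma_pos, of "real n1" "real CARD('d)" "real n2" b] n(1,2) by auto
  show "c \<le> loss tau \<delta>2 \<delta>3 \<gamma> b c lS (ev (q k, readsym tau (T k) (H k))) (T k) (H k)"
    using n(3) l0 B(1) by simp
  show "loss tau \<delta>2 \<delta>3 \<gamma> b c lS (ev (q k, readsym tau (T k) (H k))) (T k) (H k)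
                  \<le> c + 8 * b^2 * real CARD('d) * \<gamma> + 3 * real CARD('d) * \<gamma>"
    using n(3) l0 B(2) by simp
next
  have vk: "valid_config tau (T K) (H K)" "heads_interior tau (H K)" using valid by auto
  obtain n1 n2 :: nat where n: "n1 \<le> CARD('d)" "n2 \<le> CARD('d)"
    "loss tau \<delta>2 \<delta>3 \<gamma> b c lS (ev (q K, readsym tau (T K) (H K))) (T K) (H K)
       = c + lS (ev (q K, readsym tau (T K) (H K))) + 2*\<gamma>*real n1 + 8*b^2*\<gamma>*real n2 + \<gamma> * real CARD('d)"
    using loss_eval[OF vk] by blast
  have l0: "lS (ev (q K, readsym tau (T K) (H K))) = - (b^3 * \<gamma>)"
    using lS_okD(2)[OF lS] halt unfolding wv_def by simp
  have B: "2*\<gamma>*real n1 + 8*b^2*\<gamma>*real n2 + \<gamma>*real CARD('d) \<le> 8*b^2*real CARD('d)*\<gamma> + 3*real CARD('d)*\<gamma>"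
    using bound_num[OF gamma_pos, of "real n1" "real CARD('d)" "real n2" b] n(1,2) by auto
  show "loss tau \<delta>2 \<delta>3 \<gamma> b c lS (ev (q K, readsym tau (T K) (H K))) (T K) (H K)
            \<le> c + 8 * b^2 * real CARD('d) * \<gamma> + 3 * real CARD('d) * \<gamma> - b^3 * \<gamma>"
    using n(3) l0 B by simp
qed

end
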